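(* Let $\alpha\in\mathbb C$. For every integer $n\ge1$, $$A_\alpha^n=\sum_{i=0}^{\lfloor (n-1)/2\rfloor}\binom{n}{i}P_{n-2i,\alpha}+\varphi_n I,$$ where $\varphi_n=0$ if $n$ is odd and $\varphi_n=\binom{n}{n/2}$ if $n$ is even. All matrices are semi-infinite with rows and columns indexed by the positive integers; $I$ is the semi-infinite identity and $e_1$ its first column. $T(a)$ denotes the Toeplitz matrix with $(i,j)$ entry $a_{j-i}$ for $a(z)=\sum_{i\in\mathbb Z}a_iz^i$. For a vector/power series $v(z)=\sum_{i\ge1}v_iz^i$, $H(v)$ denotes the semi-infinite Hankel matrix with $(i,j)$ entry $v_{i+j-1}$ (its first column is $(v_1,v_2,\ldots)^T$). $A_\alpha:=T(z+z^{-1})+\alpha e_1e_1^T$ (tridiagonal, ones on sub- and superdiagonal, $(1,1)$ entry $\alpha$). Let $\theta=\alpha^2-1$, $h_1(z)=\alpha z$, and $h_n(z)=\theta\sum_{i=1}^{n-1}\alpha^{n-i-1}z^i+\alpha z^n$ for $n\ge2$. Define $H_{n,\alpha}=H(h_n)$, $P_{0,\alpha}=I$ and $P_{n,\alpha}=T(z^n+z^{-n})+H_{n,\alpha}$ for $n\ge1$ (so $P_{1,\alpha}=A_\alpha$). *)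

theory Defs
  imports "HOL-Analysis.Analysis"
begin

text \<open>Semi-infinite matrices, rows/columns indexed by positive integers
  (entries at index 0 are irrelevant and ignored).\<close>
type_synonym smat = "nat \<Rightarrow> nat \<Rightarrow> complex"

definition sid :: smat where
  "sid = (\<lambda>i j. if i = j then 1 else 0)"

definition smul :: "smat \<Rightarrow> smat \<Rightarrow> smat" where
  "smul A B = (\<lambda>i j. infsum (\<lambda>k. A i k * B k j) {1..})"

fun spow :: "smat \<Rightarrow> nat \<Rightarrow> smat" where
  "spow A 0 = sid"
| "spow A (Suc n) = smul A (spow A n)"

definition toeplitz :: "(int \<Rightarrow> complex) \<Rightarrow> smat" where
  "toeplitz a = (\<lambda>i j. a (int j - int i))"

definition hankel :: "(nat \<Rightarrow> complex) \<Rightarrow> smat" where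
  "hankel v = (\<lambda>i j. v (i + j - 1))"

definition A_mat :: "complex \<Rightarrow> smat" where
  "A_mat \<alpha> = (\<lambda>i j. toeplitz (\<lambda>k. if k = 1 \<or> k = -1 then 1 else 0) i j
                      + \<alpha> * (if i = 1 \<and> j = 1 then 1 else 0))"

definition h_coeff :: "complex \<Rightarrow> nat \<Rightarrow> nat \<Rightarrow> complex" where
  "h_coeff \<alpha> n k =
     (if 1 \<le> k \<and> k \<le> n - 1 then (\<alpha>\<^sup>2 - 1) * \<alpha> ^ (n - k - 1) else 0)
     + (if k = n then \<alpha> else 0)"

definition P_mat :: "nat \<Rightarrow> complex \<Rightarrow> smat" where
  "P_mat n \<alpha> = (if n = 0 then sid else
     (\<lambda>i j. toeplitz (\<lambda>k. if k = int n \<or> k = - int n then 1 else 0) i j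
            + hankel (h_coeff \<alpha> n) i j))"

end

theory Submission
  imports Defs
begin

lemma A_eq: "A_mat \<alpha> i j = (if j = i+1 \<or> i = j+1 then 1 else 0) + (if i=1 \<and> j=1 then \<alpha> else 0)"
  unfolding A_mat_def toeplitz_def by auto

lemma P_eq: "m \<ge> 1 \<Longrightarrow> P_mat m \<alpha> i j = (if j = i+m \<or> i = j+m then 1 else 0) + h_coeff \<alpha> m (i+j-1)"
  unfolding P_mat_def toeplitz_def hankel_def by auto

lemma smulA: assumes "i \<ge> 1"
  shows "smul (A_mat \<alpha>) B i j = (if i = 1 then \<alpha> * B 1 j else B (i-1) j) + B (i+1) j"
proof (cases "i = 1")
  case True
  have "smul (A_mat \<alpha>) B i j = infsum (\<lambda>k. A_mat \<alpha> i k * B k j) {1,2}"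
    unfolding smul_def by (rule infsum_cong_neutral) (auto simp: A_eq True)
  also have "\<dots> = \<alpha> * B 1 j + B 2 j" by (simp add: A_eq True)
  finally show ?thesis using True by (simp add: numeral_2_eq_2)
next
  case False
  have "smul (A_mat \<alpha>) B i j = infsum (\<lambda>k. A_mat \<alpha> i k * B k j) {i-1,i+1}"
    unfolding smul_def by (rule infsum_cong_neutral) (use assms False in \<open>auto simp: A_eq\<close>)
  also have "\<dots> = B (i-1) j + B (i+1) j" using assms False by (simp add: A_eq)
  finally show ?thesis using False by simp
qed

lemma h_eq: "h_coeff \<alpha> m k = (if 1 \<le> k \<and> k < m then (\<alpha>^2-1) * \<alpha>^(m-k-1) else 0) + (if k = m then \<alpha> else 0)"
  unfolding h_coeff_def by auto

lemma hrec: assumes "m \<ge> 1" "s \<ge> 2"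
  shows "h_coeff \<alpha> m (s-1) + h_coeff \<alpha> m (s+1) = h_coeff \<alpha> (m+1) s + h_coeff \<alpha> (m-1) s"
proof -
  consider "s + 2 \<le> m" | "s + 1 = m" | "s = m" | "s = m + 1" | "s \<ge> m+2" by linarith
  then show ?thesis
  proof cases
    case 1
    then obtain d where d: "m = s + 2 + d" using le_Suc_ex by blast
    obtain t where t: "s = t + 2" using assms(2) le_Suc_ex by (metis add.commute)
    show ?thesis using assms unfolding h_eq d t
      by (simp add: power_add power2_eq_square algebra_simps Suc_diff_le)
  qed (use assms in \<open>auto simp: h_eq\<close>)
qed

lemma hrec1: assumes "m \<ge> 2" "j \<ge> 1"
  shows "(if j = m+1 then \<alpha> else 0) + \<alpha> * h_coeff \<alpha> m j + h_coeff \<alpha> m (j+1)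
     = h_coeff \<alpha> (m+1) j + (if j = m then 1 else 0) + h_coeff \<alpha> (m-1) j"
proof -
  consider "j + 2 \<le> m" | "j + 1 = m" | "j = m" | "j = m + 1" | "j \<ge> m+2" by linarith
  then show ?thesis
  proof cases
    case 1
    then obtain d where d: "m = j + 2 + d" using le_Suc_ex by blast
    show ?thesis using assms unfolding h_eq d
      by (simp add: power_add power2_eq_square algebra_simps Suc_diff_le)
  qed (use assms in \<open>auto simp: h_eq power2_eq_square algebra_simps\<close>)
qed

definition Q :: "complex \<Rightarrow> int \<Rightarrow> smat" where
  "Q \<alpha> m = (if m = 0 then (\<lambda>i j. 2 * sid i j) else P_mat (nat \<bar>m\<bar>) \<alpha>)"

lemma Q_neg: "Q \<alpha> (-m) = Q \<alpha> m" unfolding Q_def by simp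

lemma AQnat: assumes "i \<ge> 1" "j \<ge> 1"
  shows "smul (A_mat \<alpha>) (Q \<alpha> (int m)) i j = Q \<alpha> (int m + 1) i j + Q \<alpha> (int m - 1) i j"
proof -
  consider "m = 0" | "m = 1" | "m \<ge> 2" by linarith
  then show ?thesis
  proof cases
    case 1
    have q: "Q \<alpha> 0 = (\<lambda>i j. 2 * sid i j)" "Q \<alpha> 1 = P_mat 1 \<alpha>" "Q \<alpha> (-1) = P_mat 1 \<alpha>"
      by (auto simp: Q_def)
    show ?thesis
    proof (cases "i = 1")
      case True
      then show ?thesis using assms unfolding smulA[OF assms(1)] 1
        by (simp add: q P_eq h_eq sid_def)
    next
      case False
      then show ?thesis using assms unfolding smulA[OF assms(1)] 1
        by (simp add: q P_eq h_eq sid_def) auto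
    qed
  next
    case 2
    have q: "Q \<alpha> 0 = (\<lambda>i j. 2 * sid i j)" "Q \<alpha> 1 = P_mat 1 \<alpha>" "Q \<alpha> 2 = P_mat 2 \<alpha>"
      by (auto simp: Q_def)
    show ?thesis
    proof (cases "i = 1")
      case True
      have e: "smul (A_mat \<alpha>) (Q \<alpha> (int m)) i j = \<alpha> * P_mat 1 \<alpha> 1 j + P_mat 1 \<alpha> 2 j"
        using True 2 by (simp add: smulA q numeral_2_eq_2)
      have f: "Q \<alpha> (int m + 1) i j + Q \<alpha> (int m - 1) i j = P_mat 2 \<alpha> 1 j + 2 * sid 1 j"
        using True 2 by (simp add: q)
      consider "j = 1" | "j = 2" | "j \<ge> 3" using assms by linarith
      then show ?thesis unfolding e f
        by cases (simp_all add: P_eq h_eq sid_def power2_eq_square)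
    next
      case False
      have e: "smul (A_mat \<alpha>) (Q \<alpha> (int m)) i j = P_mat 1 \<alpha> (i-1) j + P_mat 1 \<alpha> (i+1) j"
        using False assms 2 by (simp add: smulA q)
      have f: "Q \<alpha> (int m + 1) i j + Q \<alpha> (int m - 1) i j = P_mat 2 \<alpha> i j + 2 * sid i j"
        using 2 by (simp add: q)
      have h: "h_coeff \<alpha> 1 (i+j-1-1) + h_coeff \<alpha> 1 (i+j-1+1) = h_coeff \<alpha> (1+1) (i+j-1) + h_coeff \<alpha> (1-1) (i+j-1)"
        by (rule hrec) (use assms False in auto)
      have h0: "h_coeff \<alpha> 0 (i+j-1) = 0" using assms by (simp add: h_coeff_def)
      have i: "i+j-1-1 = i - 1 + j - 1" "i+j-1+1 = i+1+j-1" using assms False by auto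
      show ?thesis unfolding e f P_eq[OF order_refl] P_eq[of 2, simplified]
        using h h0 i assms False by (auto simp: sid_def numeral_2_eq_2)
    qed
  next
    case 3
    have q1: "Q \<alpha> (int m + 1) = P_mat (m+1) \<alpha>" "Q \<alpha> (int m - 1) = P_mat (m-1) \<alpha>"
      "Q \<alpha> (int m) = P_mat m \<alpha>"
      using 3 by (auto simp: Q_def nat_diff_distrib nat_add_distrib)
    show ?thesis
    proof (cases "i = 1")
      case True
      have p: "P_mat m \<alpha> 1 j = (if j = m+1 then 1 else 0) + h_coeff \<alpha> m j"
        "P_mat m \<alpha> 2 j = (if j = m+2 then 1 else 0) + h_coeff \<alpha> m (j+1)"
        "P_mat (m+1) \<alpha> 1 j = (if j = m+2 then 1 else 0) + h_coeff \<alpha> (m+1) j"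
        "P_mat (m-1) \<alpha> 1 j = (if j = m then 1 else 0) + h_coeff \<alpha> (m-1) j"
        using 3 assms by (auto simp: P_eq)
      have l: "smul (A_mat \<alpha>) (P_mat m \<alpha>) 1 j = \<alpha> * P_mat m \<alpha> 1 j + P_mat m \<alpha> 2 j"
        by (simp add: smulA numeral_2_eq_2)
      have a: "\<alpha> * (if j = m+1 then 1 else 0) = (if j = m+1 then \<alpha> else 0)" by simp
      show ?thesis unfolding q1 l p True
        using hrec1[OF 3 assms(2), of \<alpha>] unfolding a[symmetric]
        by (simp add: algebra_simps split del: if_split)
    next
      case False
      have "h_coeff \<alpha> m (i+j-1-1) + h_coeff \<alpha> m (i+j-1+1) = h_coeff \<alpha> (m+1) (i+j-1) + h_coeff \<alpha> (m-1) (i+j-1)"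
        by (rule hrec) (use 3 assms False in auto)
      moreover have "i+j-1-1 = i - 1 + j - 1" "i+j-1+1 = i+1+j-1" using assms False by auto
      ultimately have h: "h_coeff \<alpha> m (i - 1 + j - 1) + h_coeff \<alpha> m (i+1+j-1) = h_coeff \<alpha> (m+1) (i+j-1) + h_coeff \<alpha> (m-1) (i+j-1)"
        by simp
      have l: "smul (A_mat \<alpha>) (P_mat m \<alpha>) i j = P_mat m \<alpha> (i-1) j + P_mat m \<alpha> (i+1) j"
        using False assms by (simp add: smulA)
      have t: "(if j = i - 1 + m \<or> i - 1 = j + m then 1 else 0) + (if j = i + 1 + m \<or> i + 1 = j + m then 1 else 0)
        = (if j = i + (m+1) \<or> i = j + (m+1) then 1 else 0) + (if j = i + (m-1) \<or> i = j + (m-1) then (1::complex) else 0)"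
      proof -
        obtain i' where i': "i = Suc (Suc i')" using assms False by (metis One_nat_def Suc_le_D le_SucE less_eq_Suc_le not_less_eq_eq)
        obtain m' where m': "m = Suc (Suc m')" using 3 by (metis add_2_eq_Suc le_Suc_ex)
        show ?thesis unfolding i' m' by auto
      qed
      have p: "P_mat m \<alpha> (i-1) j = (if j = i - 1 + m \<or> i - 1 = j + m then 1 else 0) + h_coeff \<alpha> m (i - 1 + j - 1)"
        "P_mat m \<alpha> (i+1) j = (if j = i + 1 + m \<or> i + 1 = j + m then 1 else 0) + h_coeff \<alpha> m (i+1+j-1)"
        "P_mat (m+1) \<alpha> i j = (if j = i + (m+1) \<or> i = j + (m+1) then 1 else 0) + h_coeff \<alpha> (m+1) (i+j-1)"
        "P_mat (m-1) \<alpha> i j = (if j = i + (m-1) \<or> i = j + (m-1) then 1 else 0) + h_coeff \<alpha> (m-1) (i+j-1)"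
        using 3 by (simp_all only: P_eq)
      show ?thesis unfolding q1 l p
        using h t
        by (simp add: algebra_simps split del: if_split)
    qed
  qed
qed

lemma AQ: assumes "i \<ge> 1" "j \<ge> 1"
  shows "smul (A_mat \<alpha>) (Q \<alpha> m) i j = Q \<alpha> (m + 1) i j + Q \<alpha> (m - 1) i j"
proof (cases "m \<ge> 0")
  case True
  then show ?thesis using AQnat[OF assms, of \<alpha> "nat m"] by simp
next
  case False
  have "smul (A_mat \<alpha>) (Q \<alpha> m) i j = smul (A_mat \<alpha>) (Q \<alpha> (int (nat (-m)))) i j"
    using False Q_neg[of \<alpha> m] by simp
  also have "\<dots> = Q \<alpha> (-m + 1) i j + Q \<alpha> (-m - 1) i j" using AQnat[OF assms, of \<alpha> "nat (-m)"] False by simp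
  also have "\<dots> = Q \<alpha> (m + 1) i j + Q \<alpha> (m - 1) i j"
  proof -
    have "-m + 1 = -(m-1)" "-m-1 = -(m+1)" by simp_all
    then show ?thesis by (simp only: Q_neg) (simp add: add.commute)
  qed
  finally show ?thesis .
qed

lemma pascal:
  fixes f :: "int \<Rightarrow> complex"
  shows "(\<Sum>k\<le>Suc n. of_nat (Suc n choose k) * f (int (Suc n) - 2 * int k))
       = (\<Sum>k\<le>n. of_nat (n choose k) * (f (int n - 2 * int k + 1) + f (int n - 2 * int k - 1)))"
proof -
  define g where "g k = f (int (Suc n) - 2 * int k)" for k
  have g1: "f (int n - 2 * int k + 1) = g k" for k unfolding g_def by (simp add: algebra_simps)
  have g2: "f (int n - 2 * int k - 1) = g (Suc k)" for k unfolding g_def by (simp add: algebra_simps)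
  have A: "(\<Sum>k\<le>Suc n. of_nat (Suc n choose k) * g k)
      = g 0 + (\<Sum>k\<le>n. of_nat (n choose k) * g (Suc k)) + (\<Sum>k\<le>n. of_nat (n choose Suc k) * g (Suc k))"
    by (simp only: sum.atMost_Suc_shift binomial_Suc_Suc of_nat_add distrib_right sum.distrib) simp
  have B: "(\<Sum>k\<le>n. of_nat (n choose k) * g k) = g 0 + (\<Sum>k\<le>n. of_nat (n choose Suc k) * g (Suc k))"
  proof -
    have "(\<Sum>k\<le>n. of_nat (n choose k) * g k) = (\<Sum>k\<le>Suc n. of_nat (n choose k) * g k)"
      by simp
    also have "\<dots> = g 0 + (\<Sum>k\<le>n. of_nat (n choose Suc k) * g (Suc k))"
      by (subst sum.atMost_Suc_shift) simp
    finally show ?thesis .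
  qed
  have "(\<Sum>k\<le>Suc n. of_nat (Suc n choose k) * f (int (Suc n) - 2 * int k)) = (\<Sum>k\<le>Suc n. of_nat (Suc n choose k) * g k)"
    unfolding g_def ..
  also have "\<dots> = (\<Sum>k\<le>n. of_nat (n choose k) * g k) + (\<Sum>k\<le>n. of_nat (n choose k) * g (Suc k))"
    unfolding A B by simp
  also have "\<dots> = (\<Sum>k\<le>n. of_nat (n choose k) * (g k + g (Suc k)))"
    by (simp add: distrib_left sum.distrib)
  finally show ?thesis unfolding g1 g2 .
qed

lemma main: assumes "i \<ge> 1" "j \<ge> 1"
  shows "(\<Sum>k\<le>n. of_nat (n choose k) * Q \<alpha> (int n - 2 * int k) i j) = 2 * spow (A_mat \<alpha>) n i j"
  using assms
proof (induction n arbitrary: i j)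
  case 0
  then show ?case by (simp add: Q_def)
next
  case (Suc n)
  define S where "S r = (\<Sum>k\<le>n. of_nat (n choose k) * Q \<alpha> (int n - 2 * int k) r j)" for r
  have e: "2 * spow (A_mat \<alpha>) (Suc n) i j = (if i = 1 then \<alpha> * (2 * spow (A_mat \<alpha>) n 1 j) else 2 * spow (A_mat \<alpha>) n (i-1) j) + 2 * spow (A_mat \<alpha>) n (i+1) j"
    using Suc.prems by (simp add: smulA algebra_simps)
  also have "\<dots> = (if i = 1 then \<alpha> * S 1 else S (i-1)) + S (i+1)"
    using Suc.IH[of 1 j] Suc.IH[of "i-1" j] Suc.IH[of "i+1" j] Suc.prems unfolding S_def by auto
  also have "\<dots> = (\<Sum>k\<le>n. of_nat (n choose k) * ((if i = 1 then \<alpha> * Q \<alpha> (int n - 2 * int k) 1 j else Q \<alpha> (int n - 2 * int k) (i-1) j) + Q \<alpha> (int n - 2 * int k) (i+1) j))"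
    unfolding S_def by (cases "i = 1") (simp_all add: sum_distrib_left sum.distrib algebra_simps)
  also have "\<dots> = (\<Sum>k\<le>n. of_nat (n choose k) * (Q \<alpha> (int n - 2 * int k + 1) i j + Q \<alpha> (int n - 2 * int k - 1) i j))"
    using AQ[OF Suc.prems] smulA[OF Suc.prems(1)] by simp
  also have "\<dots> = (\<Sum>k\<le>Suc n. of_nat (Suc n choose k) * Q \<alpha> (int (Suc n) - 2 * int k) i j)"
    by (rule pascal[symmetric])
  finally show ?case by simp
qed

lemma split_sum:
  fixes g :: "nat \<Rightarrow> complex"
  assumes "n \<ge> 1"
  shows "(\<Sum>k\<le>n. g k) = (\<Sum>l=0..(n-1) div 2. g l + g (n-l)) + (if even n then g (n div 2) else 0)"
proof (cases "even n")
  case False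
  then obtain m where n: "n = m + (m + 1)" by (metis oddE add.commute mult_2 add.assoc)
  have d: "(n-1) div 2 = m" unfolding n by simp
  have "(\<Sum>k\<le>n. g k) = (\<Sum>k\<le>m. g k) + (\<Sum>k=Suc m..m+(m+1). g k)"
    unfolding n by (rule sum_up_index_split)
  also have "(\<Sum>k=Suc m..m+(m+1). g k) = (\<Sum>l=0..m. g (l + Suc m))"
    using sum.shift_bounds_cl_nat_ivl[of g 0 "Suc m" m] by simp
  also have "\<dots> = (\<Sum>l=0..m. g (m + 0 - l + Suc m))"
    by (rule sum.atLeastAtMost_rev)
  also have "\<dots> = (\<Sum>l=0..m. g (n - l))" unfolding n by (rule sum.cong) (auto intro!: arg_cong[where f=g])
  finally show ?thesis using False d by (simp add: atLeast0AtMost sum.distrib)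
next
  case True
  then obtain q where q: "n = 2 * q" by (auto elim: evenE)
  with assms obtain p where "q = p + 1" by (cases q) auto
  with q have n: "n = p + (p + 2)" by simp
  have d: "(n-1) div 2 = p" unfolding n by simp
  have "(\<Sum>k\<le>n. g k) = (\<Sum>k\<le>p. g k) + (\<Sum>k=Suc p..p+(p+2). g k)"
    unfolding n by (rule sum_up_index_split)
  also have "(\<Sum>k=Suc p..p+(p+2). g k) = g (Suc p) + (\<Sum>k=Suc (Suc p)..p+(p+2). g k)"
    by (rule sum.atLeast_Suc_atMost) simp
  also have "(\<Sum>k=Suc (Suc p)..p+(p+2). g k) = (\<Sum>l=0..p. g (l + Suc (Suc p)))"
    using sum.shift_bounds_cl_nat_ivl[of g 0 "Suc (Suc p)" p] by simp
  also have "\<dots> = (\<Sum>l=0..p. g (p + 0 - l + Suc (Suc p)))"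
    by (rule sum.atLeastAtMost_rev)
  also have "\<dots> = (\<Sum>l=0..p. g (n - l))" unfolding n by (rule sum.cong) (auto intro!: arg_cong[where f=g])
  finally show ?thesis using True d n by (simp add: atLeast0AtMost sum.distrib)
qed

theorem corollary4:
  fixes \<alpha> :: complex and n :: nat
  assumes "n \<ge> 1"
  shows "\<forall>i\<ge>1. \<forall>j\<ge>1. spow (A_mat \<alpha>) n i j =
           (\<Sum>l = 0..(n - 1) div 2. of_nat (n choose l) * P_mat (n - 2 * l) \<alpha> i j)
           + (if even n then of_nat (n choose (n div 2)) else 0) * sid i j"
proof (intro allI impI)
  fix i j :: nat assume ij: "i \<ge> 1" "j \<ge> 1"
  define g where "g k = of_nat (n choose k) * Q \<alpha> (int n - 2 * int k) i j" for k
  have "2 * spow (A_mat \<alpha>) n i j = (\<Sum>k\<le>n. g k)" unfolding g_def using main[OF ij] by simp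
  also have "\<dots> = (\<Sum>l=0..(n-1) div 2. g l + g (n-l)) + (if even n then g (n div 2) else 0)"
    by (rule split_sum[OF assms])
  also have "(\<Sum>l=0..(n-1) div 2. g l + g (n-l)) = (\<Sum>l=0..(n-1) div 2. 2 * (of_nat (n choose l) * P_mat (n - 2 * l) \<alpha> i j))"
  proof (rule sum.cong)
    fix l assume l: "l \<in> {0..(n-1) div 2}"
    then have l2: "2 * l < n" using assms by auto
    have c: "n choose (n - l) = n choose l" using l2 by (intro binomial_symmetric[symmetric]) simp
    have q1: "Q \<alpha> (int n - 2 * int l) = P_mat (n - 2 * l) \<alpha>" proof -
      have e: "int n - 2 * int l = int (n - 2 * l)" using l2 by simp
      have "n - 2 * l \<noteq> 0" using l2 by simp
      moreover have e2: "nat \<bar>int n - 2 * int l\<bar> = n - 2 * l" using l2 by linarith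
      ultimately show ?thesis unfolding Q_def by (simp only: e2) simp
    qed
    have "int n - 2 * int (n - l) = - (int n - 2 * int l)" using l2 by (simp add: of_nat_diff)
    then have q2: "Q \<alpha> (int n - 2 * int (n - l)) = P_mat (n - 2 * l) \<alpha>" using q1 Q_neg[of \<alpha> "int n - 2 * int l"] by simp
    show "g l + g (n - l) = 2 * (of_nat (n choose l) * P_mat (n - 2 * l) \<alpha> i j)"
      unfolding g_def c q1 q2 by simp
  qed simp
  also have "(if even n then g (n div 2) else 0) = 2 * ((if even n then of_nat (n choose (n div 2)) else 0) * sid i j)"
  proof (cases "even n")
    case True
    then have "int n - 2 * int (n div 2) = 0" by (auto elim: evenE)
    then show ?thesis using True by (simp add: g_def Q_def)
  qed simp
  finally have "2 * spow (A_mat \<alpha>) n i j = 2 * ((\<Sum>l = 0..(n - 1) div 2. of_nat (n choose l) * P_mat (n - 2 * l) \<alpha> i j)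
           + (if even n then of_nat (n choose (n div 2)) else 0) * sid i j)"
    by (simp only: sum_distrib_left distrib_left)
  then show "spow (A_mat \<alpha>) n i j =
           (\<Sum>l = 0..(n - 1) div 2. of_nat (n choose l) * P_mat (n - 2 * l) \<alpha> i j)
           + (if even n then of_nat (n choose (n div 2)) else 0) * sid i j"
    by (subst (asm) mult_cancel_left) simp
qed
end
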